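(* Let $n\ge 2$ and integers $0<k_1<k_2<k_3\le n$ with $k_2<n$. Let $g_1:\{0,1\}^{k_2}\to\{0,1\}$ be a Boolean function depending on all of its input variables. Let $P_1$ be the $k_2$-party box on parties $1,\dots,k_2$ with $P_1(a_1\dots a_{k_2}\mid x_1\dots x_{k_2})=2^{-(k_2-1)}$ if $\bigoplus_{i=1}^{k_2}a_i=g_1(x_1,\dots,x_{k_2})$ and $0$ otherwise, and let $P_2$ be the box on parties $k_1,\dots,n$ with $P_2(b_{k_1}\dots b_n\mid x_{k_1}\dots x_n)=2^{-(n-k_1)}$ if $\bigoplus_{i=k_1}^n b_i=\prod_{i=k_1}^{k_3}x_i$ and $0$ otherwise. Using independent copies of $P_1$ and $P_2$ in parallel (each party $i$ feeding its input $x_i$ into every box it participates in), let party $i$ output $c_i=a_i$ for $1\le i\le k_1-1$, $c_i=a_i\oplus b_i$ for $k_1\le i\le k_2$, and $c_i=b_i$ for $k_2+1\le i\le n$. Then the resulting $n$-partite box has the same conditional distribution as the full-correlation box $$P(\vec c\mid\vec x)=\begin{cases}2^{-(n-1)} & \bigoplus_{i=1}^n c_i=g_1(x_1,\dots,x_{k_2})\oplus\prod_{i=k_1}^{k_3}x_i,\\ 0&\text{otherwise.}\end{cases}$$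
   Context: All inputs and outputs are bits; $\oplus$ denotes addition modulo 2. An $m$-party box is a conditional distribution of $m$ output bits given $m$ input bits. *)

theory Defs
  imports Complex_Main "HOL-Library.FuncSet"
begin

text \<open>Bits are booleans (True = 1); xor is inequality on bool.\<close>

definition bigxor :: "nat set \<Rightarrow> (nat \<Rightarrow> bool) \<Rightarrow> bool" where
  "bigxor A f = odd (card {i \<in> A. f i})"

definition depends_on_all :: "nat \<Rightarrow> ((nat \<Rightarrow> bool) \<Rightarrow> bool) \<Rightarrow> bool" where
  "depends_on_all k g = (\<forall>i\<in>{1..k}. \<exists>x\<in>{1..k} \<rightarrow>\<^sub>E (UNIV::bool set).
      g x \<noteq> g (x(i := \<not> x i)))"

definition box1 :: "nat \<Rightarrow> ((nat \<Rightarrow> bool) \<Rightarrow> bool) \<Rightarrow> (nat \<Rightarrow> bool) \<Rightarrow> (nat \<Rightarrow> bool) \<Rightarrow> real" where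
  "box1 k2 g1 a x = (if bigxor {1..k2} a = g1 (restrict x {1..k2}) then 1 / 2 ^ (k2 - 1) else 0)"

definition box2 :: "nat \<Rightarrow> nat \<Rightarrow> nat \<Rightarrow> (nat \<Rightarrow> bool) \<Rightarrow> (nat \<Rightarrow> bool) \<Rightarrow> real" where
  "box2 n k1 k3 b x = (if bigxor {k1..n} b = (\<forall>i\<in>{k1..k3}. x i) then 1 / 2 ^ (n - k1) else 0)"

definition out :: "nat \<Rightarrow> nat \<Rightarrow> (nat \<Rightarrow> bool) \<Rightarrow> (nat \<Rightarrow> bool) \<Rightarrow> nat \<Rightarrow> bool" where
  "out k1 k2 a b i = (if i < k1 then a i else if i \<le> k2 then (a i \<noteq> b i) else b i)"

definition composed_box :: "nat \<Rightarrow> nat \<Rightarrow> nat \<Rightarrow> nat \<Rightarrow> ((nat \<Rightarrow> bool) \<Rightarrow> bool)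
    \<Rightarrow> (nat \<Rightarrow> bool) \<Rightarrow> (nat \<Rightarrow> bool) \<Rightarrow> real" where
  "composed_box n k1 k2 k3 g1 c x =
     (\<Sum>a\<in>{1..k2} \<rightarrow>\<^sub>E (UNIV::bool set). \<Sum>b\<in>{k1..n} \<rightarrow>\<^sub>E (UNIV::bool set).
        if (\<forall>i\<in>{1..n}. c i = out k1 k2 a b i) then box1 k2 g1 a x * box2 n k1 k3 b x else 0)"

definition full_box :: "nat \<Rightarrow> nat \<Rightarrow> nat \<Rightarrow> nat \<Rightarrow> ((nat \<Rightarrow> bool) \<Rightarrow> bool)
    \<Rightarrow> (nat \<Rightarrow> bool) \<Rightarrow> (nat \<Rightarrow> bool) \<Rightarrow> real" where
  "full_box n k1 k2 k3 g1 c x =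
     (if bigxor {1..n} c = (g1 (restrict x {1..k2}) \<noteq> (\<forall>i\<in>{k1..k3}. x i))
      then 1 / 2 ^ (n - 1) else 0)"

end

theory Submission
  imports Defs
begin

lemma bx_insert: "finite A \<Longrightarrow> j \<notin> A \<Longrightarrow> bigxor (insert j A) f = (f j \<noteq> bigxor A f)"
proof -
  assume fa: "finite A" and j: "j \<notin> A"
  show ?thesis
  proof (cases "f j")
    case True
    hence "{i \<in> insert j A. f i} = insert j {i \<in> A. f i}" by auto
    thus ?thesis using fa j True by (simp add: bigxor_def)
  next
    case False
    hence "{i \<in> insert j A. f i} = {i \<in> A. f i}" by auto
    thus ?thesis using False by (simp add: bigxor_def)
  qed
qed

lemma bx_empty: "bigxor {} f = False" by (simp add: bigxor_def)

lemma bx_cong: "(\<And>i. i \<in> A \<Longrightarrow> f i = g i) \<Longrightarrow> bigxor A f = bigxor A g"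
proof -
  assume "\<And>i. i \<in> A \<Longrightarrow> f i = g i"
  hence "{i \<in> A. f i} = {i \<in> A. g i}" by auto
  thus ?thesis by (simp add: bigxor_def)
qed

lemma bx_union: "finite A \<Longrightarrow> finite B \<Longrightarrow> A \<inter> B = {} \<Longrightarrow> bigxor (A \<union> B) f = (bigxor A f \<noteq> bigxor B f)"
proof (induction A rule: finite_induct)
  case empty thus ?case by (simp add: bx_empty)
next
  case (insert j A)
  have "bigxor (insert j A \<union> B) f = bigxor (insert j (A \<union> B)) f" by simp
  also have "\<dots> = (f j \<noteq> bigxor (A \<union> B) f)" using insert by (intro bx_insert) auto
  finally show ?case using insert by (simp add: bx_insert) argo
qed

lemma bx_xor: "finite A \<Longrightarrow> bigxor A (\<lambda>i. f i \<noteq> g i) = (bigxor A f \<noteq> bigxor A g)"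
proof (induction A rule: finite_induct)
  case empty thus ?case by (simp add: bx_empty)
next
  case (insert j A) thus ?case by (simp add: bx_insert) blast
qed

lemma bx_flip: "finite A \<Longrightarrow> j \<in> A \<Longrightarrow> bigxor A (f(j := \<not> f j)) = (\<not> bigxor A f)"
proof -
  assume fa: "finite A" and j: "j \<in> A"
  have A: "A = insert j (A - {j})" using j by auto
  have "bigxor A (f(j := \<not> f j)) = bigxor (insert j (A - {j})) (f(j := \<not> f j))" using A by simp
  also have "\<dots> = (\<not> f j \<noteq> bigxor (A - {j}) (f(j := \<not> f j)))" using fa bx_insert[of "A - {j}" j "f(j := \<not> f j)"] by simp
  also have "bigxor (A - {j}) (f(j := \<not> f j)) = bigxor (A - {j}) f" by (rule bx_cong) auto
  also have "bigxor A f = (f j \<noteq> bigxor (A - {j}) f)" using A fa bx_insert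
    by (metis Diff_iff finite_Diff insertI1)
  ultimately show ?thesis by argo
qed

theorem lemma2:
  fixes n k1 k2 k3 :: nat and g1 :: "(nat \<Rightarrow> bool) \<Rightarrow> bool"
  assumes "n \<ge> 2" and "0 < k1" and "k1 < k2" and "k2 < k3" and "k3 \<le> n" and "k2 < n"
    and "depends_on_all k2 g1"
  shows "\<forall>x\<in>{1..n} \<rightarrow>\<^sub>E (UNIV::bool set). \<forall>c\<in>{1..n} \<rightarrow>\<^sub>E (UNIV::bool set).
           composed_box n k1 k2 k3 g1 c x = full_box n k1 k2 k3 g1 c x"
proof (intro ballI)
  fix x c :: "nat \<Rightarrow> bool"
  assume c: "c \<in> {1..n} \<rightarrow>\<^sub>E (UNIV::bool set)"
  define G where "G = g1 (restrict x {1..k2})"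
  define H where "H = (\<forall>i\<in>{k1..k3}. x i)"
  define K :: real where "K = 1 / 2 ^ (k2 - 1) * (1 / 2 ^ (n - k1))"
  define PA where "PA = {1..k2} \<rightarrow>\<^sub>E (UNIV::bool set)"
  define PB where "PB = {k1..n} \<rightarrow>\<^sub>E (UNIV::bool set)"
  define Ac where "Ac = {a \<in> PA. \<forall>i\<in>{1..<k1}. a i = c i}"
  define bb where "bb a = (\<lambda>i. if i \<in> {k1..n} then (if i \<le> k2 then c i \<noteq> a i else c i) else undefined)" for a :: "nat \<Rightarrow> bool"
  define P where "P a b = (\<forall>i\<in>{1..n}. c i = out k1 k2 a b i)" for a b
  have cund: "\<And>i. i \<notin> {1..n} \<Longrightarrow> c i = undefined" using c by (auto simp: PiE_def extensional_def)
  have inner: "(\<Sum>b\<in>PB. if P a b then box1 k2 g1 a x * box2 n k1 k3 b x else 0)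
      = (if a \<in> Ac then box1 k2 g1 a x * box2 n k1 k3 (bb a) x else 0)" if a: "a \<in> PA" for a
  proof -
    have fin: "finite PB" unfolding PB_def by (simp add: finite_PiE)
    have set: "{b \<in> PB. P a b} = (if a \<in> Ac then {bb a} else {})"
    proof (cases "a \<in> Ac")
      case True
      have "b = bb a" if b: "b \<in> PB" "P a b" for b
      proof
        fix i
        show "b i = bb a i"
        proof (cases "i \<in> {k1..n}")
          case True
          hence "i \<in> {1..n}" using assms by auto
          with b(2) have "c i = out k1 k2 a b i" unfolding P_def by blast
          thus ?thesis using True by (auto simp: bb_def out_def)
        next
          case False thus ?thesis using b(1) by (auto simp: bb_def PB_def PiE_def extensional_def)
        qed
      qed
      moreover have "bb a \<in> PB" by (auto simp: bb_def PB_def PiE_def extensional_def)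
      moreover have "P a (bb a)"
        unfolding P_def
      proof
        fix i assume i: "i \<in> {1..n}"
        show "c i = out k1 k2 a (bb a) i"
          using True i by (auto simp: Ac_def out_def bb_def)
      qed
      ultimately have "{b \<in> PB. P a b} = {bb a}" by blast
      thus ?thesis using True by simp
    next
      case False
      then obtain i where i: "i \<in> {1..<k1}" "a i \<noteq> c i" using a unfolding Ac_def by blast
      have "\<not> P a b" for b
      proof
        assume "P a b"
        hence "c i = out k1 k2 a b i" using i assms unfolding P_def by auto
        thus False using i by (auto simp: out_def)
      qed
      thus ?thesis using False by auto
    qed
    have "(\<Sum>b\<in>PB. if P a b then box1 k2 g1 a x * box2 n k1 k3 b x else 0)
        = (\<Sum>b\<in>{b \<in> PB. P a b}. box1 k2 g1 a x * box2 n k1 k3 b x)"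
      using fin by (simp add: sum.inter_filter)
    also have "\<dots> = (if a \<in> Ac then box1 k2 g1 a x * box2 n k1 k3 (bb a) x else 0)"
      unfolding set by simp
    finally show ?thesis .
  qed
  have finPA: "finite PA" unfolding PA_def by (simp add: finite_PiE)
  have AcPA: "Ac \<subseteq> PA" unfolding Ac_def by auto
  have finAc: "finite Ac" using finPA AcPA finite_subset by blast
  have comp: "composed_box n k1 k2 k3 g1 c x = (\<Sum>a\<in>Ac. box1 k2 g1 a x * box2 n k1 k3 (bb a) x)"
  proof -
    have "composed_box n k1 k2 k3 g1 c x = (\<Sum>a\<in>PA. if a \<in> Ac then box1 k2 g1 a x * box2 n k1 k3 (bb a) x else 0)"
      unfolding composed_box_def PA_def[symmetric] PB_def[symmetric] P_def[symmetric]
      by (rule sum.cong) (auto simp: inner)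
    also have "\<dots> = (\<Sum>a\<in>Ac. box1 k2 g1 a x * box2 n k1 k3 (bb a) x)"
      using finPA AcPA by (simp add: sum.inter_filter Int_absorb1 sum.If_cases)
    finally show ?thesis .
  qed
  have I1: "{1..n} = {1..<k1} \<union> ({k1..k2} \<union> {k2<..n})" using assms by auto
  have I2: "{1..k2} = {1..<k1} \<union> {k1..k2}" using assms by auto
  have I3: "{k1..n} = {k1..k2} \<union> {k2<..n}" using assms by auto
  define X where "X = bigxor {1..n} c"
  have xa: "bigxor {1..k2} a = (bigxor {1..<k1} c \<noteq> bigxor {k1..k2} a)" if "a \<in> Ac" for a
  proof -
    have "bigxor {1..k2} a = (bigxor {1..<k1} a \<noteq> bigxor {k1..k2} a)"
      unfolding I2 by (rule bx_union) auto
    moreover have "bigxor {1..<k1} a = bigxor {1..<k1} c" using that by (intro bx_cong) (auto simp: Ac_def)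
    ultimately show ?thesis by simp
  qed
  have xb: "bigxor {k1..n} (bb a) = (X \<noteq> bigxor {1..k2} a)" if "a \<in> Ac" for a
  proof -
    have "bigxor {k1..n} (bb a) = (bigxor {k1..k2} (bb a) \<noteq> bigxor {k2<..n} (bb a))"
      unfolding I3 by (rule bx_union) auto
    moreover have "bigxor {k1..k2} (bb a) = bigxor {k1..k2} (\<lambda>i. c i \<noteq> a i)"
      using assms by (intro bx_cong) (auto simp: bb_def)
    moreover have "bigxor {k2<..n} (bb a) = bigxor {k2<..n} c"
      using assms by (intro bx_cong) (auto simp: bb_def)
    moreover have "bigxor {k1..k2} (\<lambda>i. c i \<noteq> a i) = (bigxor {k1..k2} c \<noteq> bigxor {k1..k2} a)"
      by (rule bx_xor) auto
    moreover have "X = (bigxor {1..<k1} c \<noteq> (bigxor {k1..k2} c \<noteq> bigxor {k2<..n} c))"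
      proof -
      have d1: "{1..<k1} \<inter> ({k1..k2} \<union> {k2<..n}) = {}" "{k1..k2} \<inter> {k2<..n} = {}" using assms by auto
      have "bigxor ({1..<k1} \<union> ({k1..k2} \<union> {k2<..n})) c = (bigxor {1..<k1} c \<noteq> bigxor ({k1..k2} \<union> {k2<..n}) c)"
        using d1 by (intro bx_union) auto
      moreover have "bigxor ({k1..k2} \<union> {k2<..n}) c = (bigxor {k1..k2} c \<noteq> bigxor {k2<..n} c)"
        using d1 by (intro bx_union) auto
      ultimately show ?thesis unfolding X_def I1[symmetric] by simp
    qed
    ultimately show ?thesis using xa[OF that] by auto
  qed
  have trm: "box1 k2 g1 a x * box2 n k1 k3 (bb a) x = (if bigxor {1..k2} a = G \<and> X = (G \<noteq> H) then K else 0)"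
    if "a \<in> Ac" for a
    using xb[OF that] unfolding box1_def box2_def G_def[symmetric] H_def[symmetric] K_def by auto
  show "composed_box n k1 k2 k3 g1 c x = full_box n k1 k2 k3 g1 c x"
  proof (cases "X = (G \<noteq> H)")
    case False
    have z: "box1 k2 g1 a x * box2 n k1 k3 (bb a) x = 0" if "a \<in> Ac" for a
    proof -
      have nc: "\<not> (bigxor {1..k2} a = G \<and> X = (G \<noteq> H))" using False by blast
      show ?thesis using trm[OF that] if_not_P[OF nc, of K 0] by metis
    qed
    hence "composed_box n k1 k2 k3 g1 c x = 0" unfolding comp by (simp add: sum.neutral)
    thus ?thesis using False unfolding full_box_def X_def G_def H_def by simp
  next
    case True
    define E where "E = {a \<in> Ac. bigxor {1..k2} a = G}"
    define Od where "Od = {a \<in> Ac. bigxor {1..k2} a \<noteq> G}"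
    have "composed_box n k1 k2 k3 g1 c x = (\<Sum>a\<in>Ac. if bigxor {1..k2} a = G then K else 0)"
      unfolding comp using trm True by (intro sum.cong) auto
    also have "\<dots> = K * card E" using finAc unfolding E_def by (simp add: sum.If_cases Int_def)
    finally have cE: "composed_box n k1 k2 k3 g1 c x = K * card E" .
    define fl where "fl a = a(k2 := \<not> a k2)" for a :: "nat \<Rightarrow> bool"
    have flAc: "fl a \<in> Ac" if "a \<in> Ac" for a
      using that assms by (auto simp: fl_def Ac_def PA_def PiE_def extensional_def)
    have flx: "bigxor {1..k2} (fl a) = (\<not> bigxor {1..k2} a)" for a
      unfolding fl_def using assms by (intro bx_flip) auto
    have flx': "bigxor {Suc 0..k2} (fl a) = (\<not> bigxor {Suc 0..k2} a)" for a
      using flx[of a] by simp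
    have ff: "fl (fl a) = a" for a by (auto simp: fl_def)
    have "bij_betw fl E Od"
      by (rule bij_betwI[where g = fl]) (auto simp: E_def Od_def flAc flx' ff)
    hence cEO: "card E = card Od" by (rule bij_betw_same_card)
    have "card Ac = card E + card Od"
    proof -
      have "Ac = E \<union> Od" "E \<inter> Od = {}" unfolding E_def Od_def by auto
      moreover have "finite E" "finite Od" using finAc unfolding E_def Od_def by auto
      ultimately show ?thesis by (simp add: card_Un_disjoint)
    qed
    moreover have "card Ac = 2 ^ (k2 - k1 + 1)"
    proof -
      let ?R = "{k1..k2} \<rightarrow>\<^sub>E (UNIV::bool set)"
      have "bij_betw (\<lambda>a. restrict a {k1..k2}) Ac ?R"
      proof (rule bij_betwI[where g = "\<lambda>f i. if i \<in> {1..<k1} then c i else f i"])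
        show "(\<lambda>a. restrict a {k1..k2}) \<in> Ac \<rightarrow> ?R" by auto
        show "(\<lambda>f i. if i \<in> {1..<k1} then c i else f i) \<in> ?R \<rightarrow> Ac"
          using assms by (auto simp: Ac_def PA_def PiE_def extensional_def)
        show "(\<lambda>i. if i \<in> {1..<k1} then c i else restrict a {k1..k2} i) = a" if "a \<in> Ac" for a
        proof
          fix i show "(if i \<in> {1..<k1} then c i else restrict a {k1..k2} i) = a i"
            using that assms by (auto simp: Ac_def PA_def PiE_def extensional_def)
        qed
        show "restrict (\<lambda>i. if i \<in> {1..<k1} then c i else f i) {k1..k2} = f" if "f \<in> ?R" for f
        proof
          fix i show "restrict (\<lambda>i. if i \<in> {1..<k1} then c i else f i) {k1..k2} i = f i"
            using that by (auto simp: PiE_def extensional_def)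
        qed
      qed
      hence "card Ac = card ?R" by (rule bij_betw_same_card)
      also have "\<dots> = 2 ^ (k2 - k1 + 1)" using assms by (simp add: card_PiE Suc_diff_le)
      finally show ?thesis .
    qed
    moreover have "(2::nat) ^ (k2 - k1 + 1) = 2 * 2 ^ (k2 - k1)" by simp
    ultimately have "card E = 2 ^ (k2 - k1)" using cEO by linarith
    hence "composed_box n k1 k2 k3 g1 c x = K * 2 ^ (k2 - k1)" using cE by simp
    also have "\<dots> = 1 / 2 ^ (n - 1)"
    proof -
      have e: "(k2 - 1) + (n - k1) = (k2 - k1) + (n - 1)" using assms by auto
      have "(2::real) ^ (k2 - 1) * 2 ^ (n - k1) = 2 ^ (k2 - k1) * 2 ^ (n - 1)"
        by (metis e power_add)
      thus ?thesis unfolding K_def by (simp add: field_simps)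
    qed
    finally show ?thesis using True unfolding full_box_def X_def G_def H_def by simp
  qed
qed

end
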